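(* Let $t\in\mathbb{Q}$, $t\neq 2$. Let $[x,y,1]$ be a point of $F_5\cap C_t$ (over $\overline{\mathbb{Q}}$) distinct from $P=[\zeta_3,\zeta_3^2,1]$ and $\overline P=[\zeta_3^2,\zeta_3,1]$. Then $f_t(x)=0$ and $y=\sum_{i=0}^5 a_i x^i$.
   Context: $F_5$ is the Fermat curve $x^5+y^5+z^5=0$ in $\mathbb{P}^2$; $\zeta_3$ is a primitive cube root of unity. For $t\in\mathbb{Q}$, $t\neq2$, $C_t$ is the conic $x^2+y^2+z^2+t(xy+xz+yz)=0$. Put $u=\frac{3t^2-2t+2}{t^2+t-1}$, $v=\frac{t^5-5t^4+10t^3-20t^2+15t-7}{(t-2)(t^2+t-1)^2}$, $w=\frac{-3t^5+10t^4-20t^3+20t^2-20t+6}{(t-2)(t^2+t-1)^2}$, and $f_t=X^6+uX^5+vX^4+wX^3+vX^2+uX+1\in\mathbb{Q}[X]$. Put $s=(t^4-3t^3-t^2+3t+1)(t-2)$ (nonzero for rational $t\ne2$) and $a_0=-\frac{(t^2+1)(t^3-t^2+2t-3)}{s}$, $a_1=-\frac{3t^7-9t^6+16t^5-15t^4+10t^3-11t^2+8t-7}{(t^2+t-1)s}$, $a_2=\frac{2t^8-14t^7+52t^6-99t^5+100t^4-54t^3+38t^2-44t+13}{(t^2+t-1)(t-2)s}$, $a_3=\frac{t^8+t^7-21t^6+65t^5-90t^4+78t^3-57t^2+32t-15}{(t^2+t-1)(t-2)s}$, $a_4=-\frac{2t^5-6t^4+13t^3-14t^2+7t-5}{s}$,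 $a_5=-\frac{(t^2+t-1)(t^3-t^2+2t-3)}{s}$. *)

theory Defs
  imports "HOL-Computational_Algebra.Polynomial" Complex_Main
begin

definition zeta3 :: complex where
  "zeta3 = cis (2 * pi / 3)"

definition Fermat5 :: "complex \<Rightarrow> complex \<Rightarrow> complex \<Rightarrow> bool" where
  "Fermat5 x y z \<longleftrightarrow> x^5 + y^5 + z^5 = 0"

definition conicC :: "rat \<Rightarrow> complex \<Rightarrow> complex \<Rightarrow> complex \<Rightarrow> bool" where
  "conicC t x y z \<longleftrightarrow>
     x^2 + y^2 + z^2 + of_rat t * (x*y + x*z + y*z) = 0"

definition uu :: "rat \<Rightarrow> rat" where
  "uu t = (3*t^2 - 2*t + 2) / (t^2 + t - 1)"

definition vv :: "rat \<Rightarrow> rat" where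
  "vv t = (t^5 - 5*t^4 + 10*t^3 - 20*t^2 + 15*t - 7) / ((t - 2) * (t^2 + t - 1)^2)"

definition ww :: "rat \<Rightarrow> rat" where
  "ww t = (-3*t^5 + 10*t^4 - 20*t^3 + 20*t^2 - 20*t + 6) / ((t - 2) * (t^2 + t - 1)^2)"

definition ft :: "rat \<Rightarrow> rat poly" where
  "ft t = [:1, uu t, vv t, ww t, vv t, uu t, 1:]"

definition ss :: "rat \<Rightarrow> rat" where
  "ss t = (t^4 - 3*t^3 - t^2 + 3*t + 1) * (t - 2)"

definition acoef :: "rat \<Rightarrow> nat \<Rightarrow> rat" where
  "acoef t i =
    (if i = 0 then - ((t^2 + 1) * (t^3 - t^2 + 2*t - 3)) / ss t
     else if i = 1 then - (3*t^7 - 9*t^6 + 16*t^5 - 15*t^4 + 10*t^3 - 11*t^2 + 8*t - 7)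
                         / ((t^2 + t - 1) * ss t)
     else if i = 2 then (2*t^8 - 14*t^7 + 52*t^6 - 99*t^5 + 100*t^4 - 54*t^3 + 38*t^2 - 44*t + 13)
                         / ((t^2 + t - 1) * (t - 2) * ss t)
     else if i = 3 then (t^8 + t^7 - 21*t^6 + 65*t^5 - 90*t^4 + 78*t^3 - 57*t^2 + 32*t - 15)
                         / ((t^2 + t - 1) * (t - 2) * ss t)
     else if i = 4 then - (2*t^5 - 6*t^4 + 13*t^3 - 14*t^2 + 7*t - 5) / ss t
     else if i = 5 then - ((t^2 + t - 1) * (t^3 - t^2 + 2*t - 3)) / ss t
     else 0)"

end

theory Submission imports Defs begin

definition alC :: "complex \<Rightarrow> complex \<Rightarrow> complex" where
  "alC x T = (1 - 3*T^2 + T^4 + 2*x*T - 6*x*T^2 - 3*x*T^3 + 4*x*T^4 + 2*x^2 - 5*x^2*T^2 - 6*x^2*T^3 + 6*x^2*T^4 + 2*x^3*T - 6*x^3*T^2 - 3*x^3*T^3 + 4*x^3*T^4 + x^4 - 3*x^4*T^2 + x^4*T^4)"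

definition beC :: "complex \<Rightarrow> complex \<Rightarrow> complex" where
  "beC x T = (1 - 2*T + T^3 - 2*x*T - 4*x*T^2 + 3*x*T^3 + x*T^4 - 4*x^2*T - 4*x^2*T^2 + 2*x^2*T^3 + 3*x^2*T^4 - 4*x^3*T - 4*x^3*T^2 + 2*x^3*T^3 + 3*x^3*T^4 - 2*x^4*T - 4*x^4*T^2 + 3*x^4*T^3 + x^4*T^4 + x^5 - 2*x^5*T + x^5*T^3)"

definition ftC :: "complex \<Rightarrow> complex \<Rightarrow> complex" where
  "ftC x T = (- 2 + 5*T - 5*T^3 + T^5 + 4*x - 10*x*T + 10*x*T^2 - 5*x*T^3 - 5*x*T^4 + 3*x*T^5 - 7*x^2 + 15*x^2*T - 20*x^2*T^2 + 10*x^2*T^3 - 5*x^2*T^4 + x^2*T^5 + 6*x^3 - 20*x^3*T + 20*x^3*T^2 - 20*x^3*T^3 + 10*x^3*T^4 - 3*x^3*T^5 - 7*x^4 + 15*x^4*T - 20*x^4*T^2 + 10*x^4*T^3 - 5*x^4*T^4 + x^4*T^5 + 4*x^5 - 10*x^5*T + 10*x^5*T^2 - 5*x^5*T^3 - 5*x^5*T^4 + 3*x^5*T^5 - 2*x^6 + 5*x^6*T - 5*x^6*T^3 + x^6*T^5)"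

definition EC :: "complex \<Rightarrow> complex" where
  "EC T = (- 4 - 4*T + 27*T^2 - 2*T^3 - 35*T^4 + 17*T^5 + 7*T^6 - 6*T^7 + T^8)"

definition AtC :: "complex \<Rightarrow> complex \<Rightarrow> complex" where
  "AtC x T = (6 - 13*T + 11*T^2 - 13*T^3 + 5*T^4 + 2*T^5 - T^6 + 2*T^7 - T^8 - 14*x + 23*x*T - 30*x*T^2 + 31*x*T^3 - 40*x*T^4 + 47*x*T^5 - 34*x*T^6 + 15*x*T^7 - 3*x*T^8 + 13*x^2 - 44*x^2*T + 38*x^2*T^2 - 54*x^2*T^3 + 100*x^2*T^4 - 99*x^2*T^5 + 52*x^2*T^6 - 14*x^2*T^7 + 2*x^2*T^8 - 15*x^3 + 32*x^3*T - 57*x^3*T^2 + 78*x^3*T^3 - 90*x^3*T^4 + 65*x^3*T^5 - 21*x^3*T^6 + x^3*T^7 + x^3*T^8 + 10*x^4 - 29*x^4*T + 44*x^4*T^2 - 56*x^4*T^3 + 30*x^4*T^4 + 5*x^4*T^5 - 13*x^4*T^6 + 8*x^4*T^7 - 2*x^4*T^8 - 6*x^5 + 19*x^5*T - 12*x^5*T^2 - 8*x^5*T^3 + 5*x^5*T^4 - 2*x^5*T^5 + 3*x^5*T^6 + x^5*T^7 - x^5*T^8)"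

definition QC :: "complex \<Rightarrow> complex \<Rightarrow> complex" where
  "QC x T = (- 1 + 2*T - 9*T^2 - 3*T^3 + 16*T^4 - 9*T^5 + 3*T^6 - T^7 + 5*x - 20*x*T^2 - 8*x*T^3 + 36*x*T^4 - 22*x*T^5 + 9*x*T^6 - 3*x*T^7 + x^2 + 4*x^2*T - 25*x^2*T^2 + 12*x^2*T^3 + 11*x^2*T^4 - 10*x^2*T^5 + 7*x^2*T^6 - 3*x^2*T^7 + 3*x^3 - 2*x^3*T - 8*x^3*T^2 + 5*x^3*T^3 + x^3*T^5 + x^3*T^6 - x^3*T^7)"

definition uC :: "complex \<Rightarrow> complex \<Rightarrow> complex" where
  "uC x T = (6 - 17*T + 23*T^2 + 62*T^3 - 375*T^4 + 436*T^5 - 37*T^6 + 1068*T^7 - 4028*T^8 + 4225*T^9 + 2197*T^10 - 10069*T^11 + 10746*T^12 - 4506*T^13 - 1050*T^14 + 2198*T^15 - 1126*T^16 + 279*T^17 - 29*T^18 - 16*x + 48*x*T + 18*x*T^2 - 289*x*T^3 + 665*x*T^4 - 471*x*T^5 - 7*x*T^6 - 2157*x*T^7 + 8176*x*T^8 - 11415*x*T^9 + 3858*x*T^10 + 11471*x*T^11 - 23369*x*T^12 + 24797*x*T^13 - 17615*x*T^14 + 8597*x*T^15 - 2771*x*T^16 + 534*x*T^17 - 47*x*T^18 + 21*x^2 - 58*x^2*T - 69*x^2*T^2 + 392*x^2*T^3 - 360*x^2*T^4 - 309*x^2*T^5 - 28*x^2*T^6 + 5691*x^2*T^7 - 16463*x^2*T^8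 + 20410*x^2*T^9 - 5438*x^2*T^10 - 22816*x^2*T^11 + 43842*x^2*T^12 - 43906*x^2*T^13 + 28635*x^2*T^14 - 12597*x^2*T^15 + 3641*x^2*T^16 - 632*x^2*T^17 + 51*x^2*T^18 - 28*x^3 + 44*x^3*T + 132*x^3*T^2 - 331*x^3*T^3 + 105*x^3*T^4 + 437*x^3*T^5 + 1304*x^3*T^6 - 8748*x^3*T^7 + 17559*x^3*T^8 - 14380*x^3*T^9 - 7066*x^3*T^10 + 32763*x^3*T^11 - 42076*x^3*T^12 + 31633*x^3*T^13 - 15180*x^3*T^14 + 4521*x^3*T^15 - 713*x^3*T^16 + 21*x^3*T^17 + 7*x^3*T^18 + 18*x^4 - 37*x^4*T - 90*x^4*T^2 + 212*x^4*T^3 + 90*x^4*T^4 - 77*x^4*T^5 - 2362*x^4*T^6 + 7785*x^4*T^7 - 10313*x^4*T^8 + 1235*x^4*T^9 + 16601*x^4*T^10 - 27079*x^4*T^11 + 20345*x^4*T^12 - 5246*x^4*T^13 - 4015*x^4*T^14 + 4529*x^4*T^15 - 2006*x^4*T^16 + 455*x^4*T^17 - 44*x^4*T^18 - 8*x^5 + 20*x^5*T + 44*x^5*T^2 - 126*x^5*T^3 - 10*x^5*T^4 - 208*x^5*T^5 + 1555*x^5*T^6 - 2476*x^5*T^7 + 179*x^5*T^8 + 4910*x^5*T^9 - 7536*x^5*T^10 + 3830*x^5*T^11 + 1943*x^5*T^12 - 3522*x^5*T^13 + 1485*x^5*T^14 + 196*x^5*T^15 - 400*x^5*T^16 + 142*x^5*T^17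 - 18*x^5*T^18)"

definition vC :: "complex \<Rightarrow> complex \<Rightarrow> complex" where
  "vC x T = (1 - 4*T + 12*T^2 + 24*T^3 - 114*T^4 + 46*T^5 - 138*T^6 + 638*T^7 - 239*T^8 - 1946*T^9 + 3597*T^10 - 1794*T^11 - 2082*T^12 + 4026*T^13 - 3036*T^14 + 1268*T^15 - 293*T^16 + 30*T^17 - 6*x + 2*x*T + 52*x*T^2 - 41*x*T^3 - 60*x*T^4 + 73*x*T^5 - 364*x*T^6 + 530*x*T^7 + 1176*x*T^8 - 4640*x*T^9 + 5954*x*T^10 - 1265*x*T^11 - 6524*x*T^12 + 9991*x*T^13 - 7290*x*T^14 + 3043*x*T^15 - 708*x*T^16 + 73*x*T^17 + x^2 - 4*x^2*T + 10*x^2*T^2 + 24*x^2*T^3 - 15*x^2*T^4 - 160*x^2*T^5 - 545*x^2*T^6 + 2528*x^2*T^7 - 2789*x^2*T^8 - 1510*x^2*T^9 + 7463*x^2*T^10 - 8092*x^2*T^11 + 2072*x^2*T^12 + 3676*x^2*T^13 - 4335*x^2*T^14 + 2174*x^2*T^15 - 561*x^2*T^16 + 62*x^2*T^17 - 4*x^3 + 34*x^3*T^2 + 2*x^3*T^3 - 70*x^3*T^4 - 167*x^3*T^5 + 392*x^3*T^6 + 183*x^3*T^7 - 1372*x^3*T^8 + 1620*x^3*T^9 + 250*x^3*T^10 - 2437*x^3*T^11 + 2314*x^3*T^12 - 577*x^3*T^13 - 480*x^3*T^14 + 436*x^3*T^15 - 142*x^3*T^16 + 18*x^3*T^17)"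

definition RdC :: "complex \<Rightarrow> complex" where
  "RdC T = (4 - 4*T - 39*T^2 + 120*T^3 - 70*T^4 - 488*T^5 + 1493*T^6 - 1562*T^7 - 830*T^8 + 4730*T^9 - 5824*T^10 + 954*T^11 + 5689*T^12 - 6760*T^13 + 2135*T^14 + 1938*T^15 - 2228*T^16 + 752*T^17 + 135*T^18 - 210*T^19 + 79*T^20 - 14*T^21 + T^22)"

definition KC :: "complex \<Rightarrow> complex \<Rightarrow> complex \<Rightarrow> complex" where
  "KC x y T = (2*T - T^3 - y + y*T^2 - y^2*T + y^3 + 2*x*T + 2*x*T^2 - 3*x*T^3 - x*y*T + 2*x*y*T^2 - x*y^2*T + 2*x^2*T + 2*x^2*T^2 - 3*x^2*T^3 - x^2*y + x^2*y*T^2 + 2*x^3*T - x^3*T^3)"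

lemma L1: "x^5 + y^5 + 1 = KC x y T * (y^2 + T*(x+1)*y + (x^2+T*x+1)) + alC x T * y + beC x T"
  unfolding KC_def alC_def beC_def by algebra

lemma LR: "beC x T ^ 2 - T*(x+1) * alC x T * beC x T + (x^2+T*x+1) * alC x T ^ 2
           = - ((x^2+x+1)^2 * ftC x T)"
  unfolding alC_def beC_def ftC_def by algebra

lemma L2: "alC x T * AtC x T + EC T * beC x T = QC x T * ftC x T"
  unfolding alC_def AtC_def EC_def beC_def QC_def ftC_def by algebra

lemma L3: "uC x T * alC x T + vC x T * ftC x T = RdC T"
  unfolding alC_def uC_def vC_def ftC_def RdC_def by algebra

lemma RdC_fact: "RdC T = ((T-2)*(T^2+T-1)*(T^4-3*T^3-T^2+3*T+1)*(T^4-3*T^3+4*T^2-2*T+1))^2"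
  unfolding RdC_def by algebra

lemma elim_y:
  fixes a b y p q :: complex
  assumes "a*y+b = 0" "y^2+p*y+q = 0"
  shows "b^2 - p*a*b + q*a^2 = 0"
  using assms by algebra

lemma int_quad: "(a::int)^2 + a - 1 \<noteq> 0"
proof
  assume h: "a^2 + a - 1 = 0"
  then have "a * (a+1) = 1" by (simp add: algebra_simps power2_eq_square)
  then show False by (auto simp: zmult_eq_1_iff)
qed

lemma int_quart: "(a::int)^4 - 3*a^3 - a^2 + 3*a + 1 \<noteq> 0"
proof
  assume h: "a^4 - 3*a^3 - a^2 + 3*a + 1 = 0"
  then have "a * (3*a^2 + a - 3 - a^3) = 1" by algebra
  then have "a = 1 \<or> a = -1" unfolding zmult_eq_1_iff by blast
  with h show False by auto
qed

lemma rat_quad: "(t::rat)^2 + t - 1 \<noteq> 0"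
proof
  assume h: "t^2 + t - 1 = 0"
  obtain a b where q: "quotient_of t = (a, b)" by (cases "quotient_of t")
  have t: "t = of_int a / of_int b" using quotient_of_div[OF q] .
  have bp: "b > 0" using quotient_of_denom_pos[OF q] .
  have cop: "coprime a b" using quotient_of_coprime[OF q] .
  have bz: "(of_int b::rat) \<noteq> 0" using bp by simp
  have "of_int (a^2 + a*b - b^2) = (of_int b)^2 * (t^2 + t - 1)"
    using bz by (simp add: t field_simps power2_eq_square)
  with h have "(of_int (a^2 + a*b - b^2)::rat) = 0" by simp
  then have e: "a^2 + a*b - b^2 = 0" by (metis of_int_eq_0_iff)
  then have "a^2 = b * (b - a)" by algebra
  then have "b dvd a^2" by (metis dvdI)
  moreover have "coprime b (a^2)" using cop by (simp add: coprime_commute)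
  ultimately have "b dvd 1" using coprime_common_divisor[of b "a^2" b] by simp
  with bp have "b = 1" using zdvd_imp_le[of b 1] by linarith
  with e int_quad[of a] show False by simp
qed

lemma rat_quart: "(t::rat)^4 - 3*t^3 - t^2 + 3*t + 1 \<noteq> 0"
proof
  assume h: "t^4 - 3*t^3 - t^2 + 3*t + 1 = 0"
  obtain a b where q: "quotient_of t = (a, b)" by (cases "quotient_of t")
  have t: "t = of_int a / of_int b" using quotient_of_div[OF q] .
  have bp: "b > 0" using quotient_of_denom_pos[OF q] .
  have cop: "coprime a b" using quotient_of_coprime[OF q] .
  have bz: "(of_int b::rat) \<noteq> 0" using bp by simp
  have "of_int (a^4 - 3*a^3*b - a^2*b^2 + 3*a*b^3 + b^4) = (of_int b)^4 * (t^4 - 3*t^3 - t^2 + 3*t + 1)"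
    using bz by (simp add: t field_simps power2_eq_square power3_eq_cube power4_eq_xxxx)
  with h have "(of_int (a^4 - 3*a^3*b - a^2*b^2 + 3*a*b^3 + b^4)::rat) = 0" by simp
  then have e: "a^4 - 3*a^3*b - a^2*b^2 + 3*a*b^3 + b^4 = 0" by (metis of_int_eq_0_iff)
  then have "a^4 = b * (3*a^3 + a^2*b - 3*a*b^2 - b^3)" by algebra
  then have "b dvd a^4" by (metis dvdI)
  moreover have "coprime b (a^4)" using cop by (simp add: coprime_commute)
  ultimately have "b dvd 1" using coprime_common_divisor[of b "a^4" b] by simp
  with bp have "b = 1" using zdvd_imp_le[of b 1] by linarith
  with e int_quart[of a] show False by simp
qed

lemmas ofr = of_rat_diff of_rat_add of_rat_mult of_rat_power of_rat_numeral_eq of_rat_minus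

lemma zeta_sq: "zeta3^2 + zeta3 + 1 = 0"
  by (simp add: complex_eq_iff zeta3_def power2_eq_square cos_120 sin_120)

lemma rat_q_pos: "(t::rat)^4 - 3*t^3 + 4*t^2 - 2*t + 1 \<noteq> 0"
proof -
  have "28 * (t^4 - 3*t^3 + 4*t^2 - 2*t + 1) = 7*(2*t^2-3*t)^2 + (7*t-4)^2 + 12" by algebra
  moreover have "0 \<le> 7*(2*t^2-3*t)^2" "0 \<le> (7*t-4)^2" by simp_all
  ultimately have "28 * (t^4 - 3*t^3 + 4*t^2 - 2*t + 1) > 0" by linarith
  then show ?thesis by auto
qed

lemma rat_fifth: assumes "(s::rat)^5 = 1" shows "s = 1"
proof (cases "s < 0")
  case True
  have "s ^ Suc (2*2) < 0" using odd_power_less_zero[OF True] .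
  with assms show ?thesis by simp
next
  case False
  then have "s^5 = 1^5 \<longleftrightarrow> s = 1" by (intro power_eq_iff_eq_base) auto
  with assms show ?thesis by simp
qed

lemma poly_ft: "poly (map_poly of_rat (ft t)) (x::complex) =
   1 + of_rat (uu t) * x + of_rat (vv t) * x^2 + of_rat (ww t) * x^3 + of_rat (vv t) * x^4 + of_rat (uu t) * x^5 + x^6"
  by (simp add: ft_def map_poly_pCons) algebra

lemma sum_6: "(\<Sum>i::nat = 0..5. f i) = f 0 + f 1 + f 2 + f 3 + f 4 + (f 5 :: complex)"
  by (simp add: numeral_eq_Suc atLeast0_atMost_Suc)

theorem proposition2:
  fixes t :: rat and x y :: complex
  assumes "t \<noteq> 2"
    and "algebraic x" and "algebraic y"
    and "Fermat5 x y 1" and "conicC t x y 1"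
    and "(x, y) \<noteq> (zeta3, zeta3^2)" and "(x, y) \<noteq> (zeta3^2, zeta3)"
  shows "poly (map_poly of_rat (ft t)) x = 0
         \<and> y = (\<Sum>i = 0..5. of_rat (acoef t i) * x ^ i)"
proof -
  define T where "T = (of_rat t :: complex)"
  have F: "x^5 + y^5 + 1 = 0" using assms(4) by (simp add: Fermat5_def)
  have C0: "x^2 + y^2 + 1 + T*(x*y + x + y) = 0" using assms(5) by (simp add: conicC_def T_def)
  have C: "y^2 + T*(x+1)*y + (x^2+T*x+1) = 0" using C0 by algebra
  have ab: "alC x T * y + beC x T = 0" using L1[of x y T] F C by simp
  have R: "(x^2+x+1)^2 * ftC x T = 0" using elim_y[OF ab C] LR[of x T] by simp
  have t2: "t - 2 \<noteq> 0" using assms(1) by simp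
  have tq: "t^2 + t - 1 \<noteq> 0" by (rule rat_quad)
  have t4: "t^4 - 3*t^3 - t^2 + 3*t + 1 \<noteq> 0" by (rule rat_quart)
  have tp: "t^4 - 3*t^3 + 4*t^2 - 2*t + 1 \<noteq> 0" by (rule rat_q_pos)
  have ssnz: "ss t \<noteq> 0" using t2 t4 by (simp add: ss_def)
  have T2: "T - 2 \<noteq> 0"
  proof -
    have "T - 2 = of_rat (t - 2)" by (simp add: T_def ofr)
    then show ?thesis using t2 by (metis of_rat_eq_0_iff)
  qed
  have Tq: "T^2 + T - 1 \<noteq> 0"
  proof -
    have "T^2 + T - 1 = of_rat (t^2 + t - 1)" by (simp add: T_def ofr)
    then show ?thesis using tq by (metis of_rat_eq_0_iff)
  qed
  have T4: "T^4 - 3*T^3 - T^2 + 3*T + 1 \<noteq> 0"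
  proof -
    have "T^4 - 3*T^3 - T^2 + 3*T + 1 = of_rat (t^4 - 3*t^3 - t^2 + 3*t + 1)" by (simp add: T_def ofr)
    then show ?thesis using t4 by (metis of_rat_eq_0_iff)
  qed
  have Tp: "T^4 - 3*T^3 + 4*T^2 - 2*T + 1 \<noteq> 0"
  proof -
    have "T^4 - 3*T^3 + 4*T^2 - 2*T + 1 = of_rat (t^4 - 3*t^3 + 4*t^2 - 2*t + 1)" by (simp add: T_def ofr)
    then show ?thesis using tp by (metis of_rat_eq_0_iff)
  qed
  have nondeg: "x^2 + x + 1 \<noteq> 0"
  proof
    assume h: "x^2 + x + 1 = 0"
    have "(y - x^2) * (y - (T-1)*x^2) = (y^2 + T*(x+1)*y + (x^2+T*x+1)) - (x^2+x+1)*(T*y + 1 - (T-1)*x*(x-1))"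
      by algebra
    then have "(y - x^2) * (y - (T-1)*x^2) = 0" using C h by simp
    then consider "y = x^2" | "y = (T-1)*x^2" by auto
    then show False
    proof cases
      case 1
      have "(x - zeta3) * (x - zeta3^2) = 0" using h zeta_sq by algebra
      then consider "x = zeta3" | "x = zeta3^2" by auto
      then show False
      proof cases
        case 1
        then show False using \<open>y = x^2\<close> assms(6) by simp
      next
        case 2
        have "zeta3^4 = zeta3" using zeta_sq by algebra
        then show False using 2 \<open>y = x^2\<close> assms(7) by (simp add: power_mult[symmetric])
      qed
    next
      case 2
      have "x * ((T-1)^5 - 1) = 0" using F h 2 by algebra
      moreover have "x \<noteq> 0" using h by auto
      ultimately have "(T-1)^5 = 1" by simp
      then have "of_rat ((t-1)^5) = (1::complex)" by (simp add: T_def ofr)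
      then have "(t-1)^5 = 1" by (metis of_rat_eq_1_iff)
      then have "t - 1 = 1" by (rule rat_fifth)
      with assms(1) show False by simp
    qed
  qed
  have fz: "ftC x T = 0" using R nondeg by simp
  have D: "(T-2)*(T^2+T-1)^2 * poly (map_poly of_rat (ft t)) x = ftC x T"
  proof -
    have eu: "(t-2)*(t^2+t-1)^2 * uu t = (3*t^2-2*t+2)*(t-2)*(t^2+t-1)"
      using tq by (simp add: uu_def field_simps power2_eq_square)
    have ev: "(t-2)*(t^2+t-1)^2 * vv t = t^5 - 5*t^4 + 10*t^3 - 20*t^2 + 15*t - 7"
      using tq t2 by (simp add: vv_def)
    have ew: "(t-2)*(t^2+t-1)^2 * ww t = -3*t^5 + 10*t^4 - 20*t^3 + 20*t^2 - 20*t + 6"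
      using tq t2 by (simp add: ww_def)
    have eu': "(T-2)*(T^2+T-1)^2 * of_rat (uu t) = (3*T^2-2*T+2)*(T-2)*(T^2+T-1)"
      using arg_cong[OF eu, of "of_rat :: rat \<Rightarrow> complex"] by (simp add: T_def ofr of_rat_mult)
    have ev': "(T-2)*(T^2+T-1)^2 * of_rat (vv t) = T^5 - 5*T^4 + 10*T^3 - 20*T^2 + 15*T - 7"
      using arg_cong[OF ev, of "of_rat :: rat \<Rightarrow> complex"] by (simp add: T_def ofr of_rat_mult)
    have ew': "(T-2)*(T^2+T-1)^2 * of_rat (ww t) = -3*T^5 + 10*T^4 - 20*T^3 + 20*T^2 - 20*T + 6"
      using arg_cong[OF ew, of "of_rat :: rat \<Rightarrow> complex"] by (simp add: T_def ofr of_rat_mult)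
    have "(T-2)*(T^2+T-1)^2 * poly (map_poly of_rat (ft t)) x =
      (T-2)*(T^2+T-1)^2 + ((T-2)*(T^2+T-1)^2 * of_rat (uu t)) * x + ((T-2)*(T^2+T-1)^2 * of_rat (vv t)) * x^2
      + ((T-2)*(T^2+T-1)^2 * of_rat (ww t)) * x^3 + ((T-2)*(T^2+T-1)^2 * of_rat (vv t)) * x^4
      + ((T-2)*(T^2+T-1)^2 * of_rat (uu t)) * x^5 + (T-2)*(T^2+T-1)^2 * x^6"
      unfolding poly_ft by algebra
    also have "\<dots> = ftC x T" unfolding eu' ev' ew' ftC_def by algebra
    finally show ?thesis .
  qed
  have f0: "poly (map_poly of_rat (ft t)) x = 0"
    using D fz T2 Tq by simp
  have alnz: "alC x T \<noteq> 0"
  proof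
    assume "alC x T = 0"
    then have "RdC T = 0" using L3[of x T] fz by simp
    then show False using RdC_fact[of T] T2 Tq T4 Tp by simp
  qed
  define E where "E = (T^2+T-1)*(T-2)*((T^4 - 3*T^3 - T^2 + 3*T + 1)*(T-2))"
  have EC: "EC T = E" unfolding EC_def E_def by algebra
  have Enz: "E \<noteq> 0" using T2 Tq T4 unfolding E_def by simp
  have "alC x T * (E * y - AtC x T) = 0"
  proof -
    have "alC x T * AtC x T + E * beC x T = 0" using L2[of x T] fz EC by simp
    then show ?thesis using ab by algebra
  qed
  then have Ey: "E * y = AtC x T" using alnz by simp
  have Es: "E * (\<Sum>i = 0..5. of_rat (acoef t i) * x ^ i) = AtC x T"
  proof -
    define Er where "Er = (t^2+t-1)*(t-2)*ss t"
    have ErE: "of_rat Er = E" unfolding Er_def E_def by (simp add: T_def ofr ss_def)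
    have e0: "Er * acoef t 0 = -((t^2 + 1)*(t^3 - t^2 + 2*t - 3))*((t^2+t-1)*(t-2))"
      using ssnz by (simp add: Er_def acoef_def)
    have e1: "Er * acoef t 1 = -(3*t^7 - 9*t^6 + 16*t^5 - 15*t^4 + 10*t^3 - 11*t^2 + 8*t - 7)*(t-2)"
      using ssnz tq by (simp add: Er_def acoef_def)
    have e2: "Er * acoef t 2 = 2*t^8 - 14*t^7 + 52*t^6 - 99*t^5 + 100*t^4 - 54*t^3 + 38*t^2 - 44*t + 13"
      using ssnz tq t2 by (simp add: Er_def acoef_def)
    have e3: "Er * acoef t 3 = t^8 + t^7 - 21*t^6 + 65*t^5 - 90*t^4 + 78*t^3 - 57*t^2 + 32*t - 15"
      using ssnz tq t2 by (simp add: Er_def acoef_def)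
    have e4: "Er * acoef t 4 = -(2*t^5 - 6*t^4 + 13*t^3 - 14*t^2 + 7*t - 5)*((t^2+t-1)*(t-2))"
      using ssnz by (simp add: Er_def acoef_def)
    have e5: "Er * acoef t 5 = -((t^2 + t - 1)*(t^3 - t^2 + 2*t - 3))*((t^2+t-1)*(t-2))"
      using ssnz by (simp add: Er_def acoef_def)
    have c0: "E * of_rat (acoef t 0) = -((T^2 + 1)*(T^3 - T^2 + 2*T - 3))*((T^2+T-1)*(T-2))"
      using arg_cong[OF e0, of "of_rat :: rat \<Rightarrow> complex"] by (simp add: T_def ofr ErE[symmetric] of_rat_mult)
    have c1: "E * of_rat (acoef t 1) = -(3*T^7 - 9*T^6 + 16*T^5 - 15*T^4 + 10*T^3 - 11*T^2 + 8*T - 7)*(T-2)"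
      using arg_cong[OF e1, of "of_rat :: rat \<Rightarrow> complex"] by (simp add: T_def ofr ErE[symmetric] of_rat_mult)
    have c2: "E * of_rat (acoef t 2) = 2*T^8 - 14*T^7 + 52*T^6 - 99*T^5 + 100*T^4 - 54*T^3 + 38*T^2 - 44*T + 13"
      using arg_cong[OF e2, of "of_rat :: rat \<Rightarrow> complex"] by (simp add: T_def ofr ErE[symmetric] of_rat_mult)
    have c3: "E * of_rat (acoef t 3) = T^8 + T^7 - 21*T^6 + 65*T^5 - 90*T^4 + 78*T^3 - 57*T^2 + 32*T - 15"
      using arg_cong[OF e3, of "of_rat :: rat \<Rightarrow> complex"] by (simp add: T_def ofr ErE[symmetric] of_rat_mult)
    have c4: "E * of_rat (acoef t 4) = -(2*T^5 - 6*T^4 + 13*T^3 - 14*T^2 + 7*T - 5)*((T^2+T-1)*(T-2))"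
      using arg_cong[OF e4, of "of_rat :: rat \<Rightarrow> complex"] by (simp add: T_def ofr ErE[symmetric] of_rat_mult)
    have c5: "E * of_rat (acoef t 5) = -((T^2 + T - 1)*(T^3 - T^2 + 2*T - 3))*((T^2+T-1)*(T-2))"
      using arg_cong[OF e5, of "of_rat :: rat \<Rightarrow> complex"] by (simp add: T_def ofr ErE[symmetric] of_rat_mult)
    have "E * (\<Sum>i = 0..5. of_rat (acoef t i) * x ^ i) =
       (E * of_rat (acoef t 0)) + (E * of_rat (acoef t 1)) * x + (E * of_rat (acoef t 2)) * x^2
       + (E * of_rat (acoef t 3)) * x^3 + (E * of_rat (acoef t 4)) * x^4 + (E * of_rat (acoef t 5)) * x^5"
      unfolding sum_6 by algebra
    also have "\<dots> = AtC x T" unfolding c0 c1 c2 c3 c4 c5 AtC_def by algebra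
    finally show ?thesis .
  qed
  have "y = (\<Sum>i = 0..5. of_rat (acoef t i) * x ^ i)"
    using Ey Es Enz by (metis mult_left_cancel)
  with f0 show ?thesis by simp
qed

end
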